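(* Let $P:\mathbf{R}^{24}\to\mathbf{R}$, $P(X,Y,Z)=\mathrm{Re}((oX\cdot oY)\cdot oZ)$, let $H\subset\mathbf{R}^{24}$ be a 21-dimensional linear subspace and $S^{20}_1$ its unit sphere. Let $\delta\in[1,2)$, $a,\bar b\in S^{20}_1$, $W=P(a)$, $\bar W=P(\bar b)$, and let $$\mu_1(\delta)=\tfrac{2}{\sqrt3}\cos\Big(\tfrac{\arccos(3\sqrt3W)-\pi}{3}\Big)-W\delta,\quad \mu_2(\delta)=\tfrac{2}{\sqrt3}\cos\Big(\tfrac{\arccos(3\sqrt3W)+\pi}{3}\Big)-W\delta,$$ $$\mu_3(\delta)=-\tfrac{2}{\sqrt3}\cos\Big(\tfrac{\arccos(3\sqrt3W)}{3}\Big)-W\delta,$$ which satisfy $\mu_1(\delta)\ge\mu_2(\delta)\ge\mu_3(\delta)$ and are the roots of $T^3+3W\delta T^2+(3W^2\delta^2-1)T+W(2-\delta)+W^3\delta^3$ (i.e. of $Q(T+\delta W)$ where $Q(T)=T^3-T+2W$); define $\bar\mu_1(\delta)\ge\bar\mu_2(\delta)\ge\bar\mu_3(\delta)$ by the same formulas with $W$ replaced by $\bar W$. For $K>0$ put $$\mu_-(K)=\min_{i=1,2,3}\big(\mu_i(\delta)-K\bar\mu_i(\delta)\big),\qquad \mu_+(K)=\max_{i=1,2,3}\big(\mu_i(\delta)-K\bar\mu_i(\delta)\big).$$ Then for every $K>0$ with $|K-1|+|\bar W-W|\neq0$, $$\frac{2-\delta}{4+\delta}\le\frac{\mu_+(K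)}{-\mu_-(K)}\le\frac{4+\delta}{2-\delta}.$$
   Context: $\mathcal{O}$ denotes the algebra of Cayley octonions: the 8-dimensional real algebra with basis $1,e_1,\dots,e_7$, where $1$ is the unit, $e_i^2=-1$, $e_ie_j=-e_je_i$ for $i\neq j$, and for every $i$ (indices mod 7) $e_ie_{i+1}=e_{i+3}$, $e_{i+1}e_{i+3}=e_i$, $e_{i+3}e_i=e_{i+1}$. For $t\in\mathbf{R}^8$, $ot=t_0+t_1e_1+\dots+t_7e_7$; $\mathrm{Re}$ is the coefficient of $1$; $\mathbf{R}^{24}=(\mathbf{R}^8)^3$. On the unit sphere of $\mathbf{R}^{24}$ one has $|P|\le 1/(3\sqrt3)$. *)

theory Defs
  imports "HOL-Analysis.Analysis"
begin

text \<open>Octonion units e_1..e_7 are labelled 1..7 (index 0 is the unit 1).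
  The lines of the Fano plane are (m, m+1, m+3) with indices taken mod 7
  in the range 1..7.\<close>

definition oct_lbl :: "nat \<Rightarrow> nat \<Rightarrow> nat" where
  "oct_lbl m t = ((m + t - 1) mod 7) + 1"

definition oct_pos :: "nat \<Rightarrow> nat \<Rightarrow> nat \<Rightarrow> bool" where
  "oct_pos i j k \<longleftrightarrow> (\<exists>m\<in>{1..7}.
      (i, j, k) = (oct_lbl m 0, oct_lbl m 1, oct_lbl m 3) \<or>
      (i, j, k) = (oct_lbl m 1, oct_lbl m 3, oct_lbl m 0) \<or>
      (i, j, k) = (oct_lbl m 3, oct_lbl m 0, oct_lbl m 1))"

definition oct_c :: "nat \<Rightarrow> nat \<Rightarrow> nat \<Rightarrow> real" where
  "oct_c i j k =
     (if i = 0 then (if j = k then 1 else 0)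
      else if j = 0 then (if i = k then 1 else 0)
      else if i = j then (if k = 0 then -1 else 0)
      else if oct_pos i j k then 1
      else if oct_pos j i k then -1
      else 0)"

definition oct_mult :: "(nat \<Rightarrow> real) \<Rightarrow> (nat \<Rightarrow> real) \<Rightarrow> (nat \<Rightarrow> real)" where
  "oct_mult x y = (\<lambda>k. \<Sum>i<8. \<Sum>j<8. x i * y j * oct_c i j k)"

definition oct_of :: "real^8 \<Rightarrow> (nat \<Rightarrow> real)" where
  "oct_of t = (\<lambda>k. t $ (of_nat k :: 8))"

definition oct_Re :: "(nat \<Rightarrow> real) \<Rightarrow> real" where
  "oct_Re x = x 0"

definition P24 :: "(real^8) \<times> (real^8) \<times> (real^8) \<Rightarrow> real" where
  "P24 v = (case v of (X, Y, Z) \<Rightarrow>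
      oct_Re (oct_mult (oct_mult (oct_of X) (oct_of Y)) (oct_of Z)))"

definition mu :: "real \<Rightarrow> real \<Rightarrow> nat \<Rightarrow> real" where
  "mu W \<delta> i =
     (if i = 1 then 2 / sqrt 3 * cos ((arccos (3 * sqrt 3 * W) - pi) / 3) - W * \<delta>
      else if i = 2 then 2 / sqrt 3 * cos ((arccos (3 * sqrt 3 * W) + pi) / 3) - W * \<delta>
      else - (2 / sqrt 3) * cos (arccos (3 * sqrt 3 * W) / 3) - W * \<delta>)"

definition mu_minus :: "real \<Rightarrow> real \<Rightarrow> real \<Rightarrow> real \<Rightarrow> real" where
  "mu_minus W Wb \<delta> K = Min ((\<lambda>i. mu W \<delta> i - K * mu Wb \<delta> i) ` {1,2,3})"

definition mu_plus :: "real \<Rightarrow> real \<Rightarrow> real \<Rightarrow> real \<Rightarrow> real" where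
  "mu_plus W Wb \<delta> K = Max ((\<lambda>i. mu W \<delta> i - K * mu Wb \<delta> i) ` {1,2,3})"

end

theory Submission
  imports Defs
begin

lemma r17: "{1..7::nat} = {1,2,3,4,5,6,7}" by auto
lemma lbl: "oct_lbl 1 0 = 1" "oct_lbl 1 1 = 2" "oct_lbl 1 3 = 4"
 "oct_lbl 2 0 = 2" "oct_lbl 2 1 = 3" "oct_lbl 2 3 = 5"
 "oct_lbl 3 0 = 3" "oct_lbl 3 1 = 4" "oct_lbl 3 3 = 6"
 "oct_lbl 4 0 = 4" "oct_lbl 4 1 = 5" "oct_lbl 4 3 = 7"
 "oct_lbl 5 0 = 5" "oct_lbl 5 1 = 6" "oct_lbl 5 3 = 1"
 "oct_lbl 6 0 = 6" "oct_lbl 6 1 = 7" "oct_lbl 6 3 = 2"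
 "oct_lbl 7 0 = 7" "oct_lbl 7 1 = 1" "oct_lbl 7 3 = 3"
  by (simp_all add: oct_lbl_def)
lemma oct_pos_iff:
"oct_pos i j k \<longleftrightarrow> (i,j,k) \<in> {(1,2,4),(2,4,1),(4,1,2),(2,3,5),(3,5,2),(5,2,3),(3,4,6),(4,6,3),(6,3,4),(4,5,7),(5,7,4),(7,4,5),(5,6,1),(6,1,5),(1,5,6),(6,7,2),(7,2,6),(2,6,7),(7,1,3),(1,3,7),(3,7,1)}"
  unfolding oct_pos_def by (simp only: r17 bex_simps lbl) auto
lemma lt8: "{..<8::nat} = {0,1,2,3,4,5,6,7}" by (simp add: lessThan_nat_numeral lessThan_Suc) auto
lemma sum8: "(\<Sum>k<8::nat. f k) = f 0 + f 1 + f 2 + f 3 + f 4 + f 5 + f 6 + (f 7::real)"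
  by (simp add: lt8)
lemma om0: "oct_mult x y 0 = x 0 * y 0 - x 1 * y 1 - x 2 * y 2 - x 3 * y 3 - x 4 * y 4 - x 5 * y 5 - x 6 * y 6 - x 7 * y 7"
  unfolding oct_mult_def lt8 by (simp add: oct_c_def oct_pos_iff)
lemma om1: "oct_mult x y 1 = x 0 * y 1 + x 1 * y 0 + x 2 * y 4 + x 3 * y 7 - x 4 * y 2 + x 5 * y 6 - x 6 * y 5 - x 7 * y 3"
  unfolding oct_mult_def lt8 by (simp add: oct_c_def oct_pos_iff)
lemma om2: "oct_mult x y 2 = x 0 * y 2 - x 1 * y 4 + x 2 * y 0 + x 3 * y 5 + x 4 * y 1 - x 5 * y 3 + x 6 * y 7 - x 7 * y 6"
  unfolding oct_mult_def lt8 by (simp add: oct_c_def oct_pos_iff)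
lemma om3: "oct_mult x y 3 = x 0 * y 3 - x 1 * y 7 - x 2 * y 5 + x 3 * y 0 + x 4 * y 6 + x 5 * y 2 - x 6 * y 4 + x 7 * y 1"
  unfolding oct_mult_def lt8 by (simp add: oct_c_def oct_pos_iff)
lemma om4: "oct_mult x y 4 = x 0 * y 4 + x 1 * y 2 - x 2 * y 1 - x 3 * y 6 + x 4 * y 0 + x 5 * y 7 + x 6 * y 3 - x 7 * y 5"
  unfolding oct_mult_def lt8 by (simp add: oct_c_def oct_pos_iff)
lemma om5: "oct_mult x y 5 = x 0 * y 5 - x 1 * y 6 + x 2 * y 3 - x 3 * y 2 - x 4 * y 7 + x 5 * y 0 + x 6 * y 1 + x 7 * y 4"
  unfolding oct_mult_def lt8 by (simp add: oct_c_def oct_pos_iff)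
lemma om6: "oct_mult x y 6 = x 0 * y 6 + x 1 * y 5 - x 2 * y 7 + x 3 * y 4 - x 4 * y 3 - x 5 * y 1 + x 6 * y 0 + x 7 * y 2"
  unfolding oct_mult_def lt8 by (simp add: oct_c_def oct_pos_iff)
lemma om7: "oct_mult x y 7 = x 0 * y 7 + x 1 * y 3 + x 2 * y 6 - x 3 * y 1 + x 4 * y 5 - x 5 * y 4 - x 6 * y 2 + x 7 * y 0"
  unfolding oct_mult_def lt8 by (simp add: oct_c_def oct_pos_iff)
lemma mult_norm: "(\<Sum>k<8. oct_mult x y k ^ 2) = (\<Sum>k<8. x k ^ 2) * (\<Sum>k<8. y k ^ 2)"
  unfolding sum8 om0 om1 om2 om3 om4 om5 om6 om7 by (simp add: power2_eq_square algebra_simps)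
lemma UNIV8: "(UNIV::8 set) = {0,1,2,3,4,5,6,7}"
proof -
  have "card ({0,1,2,3,4,5,6,7}::8 set) = CARD(8)" by simp
  from card_subset_eq[OF finite_class.finite_UNIV subset_UNIV this] show ?thesis by simp
qed
lemma norm8: "norm (X::real^8) ^ 2 = (\<Sum>k<8. oct_of X k ^ 2)"
proof -
  have "norm X ^ 2 = (\<Sum>i\<in>UNIV. X$i ^ 2)"
    unfolding norm_vec_def L2_set_def by (simp add: sum_nonneg)
  also have "\<dots> = (\<Sum>k<8. oct_of X k ^ 2)"
    unfolding UNIV8 lt8 oct_of_def by simp
  finally show ?thesis .
qed
lemma t1: fixes A B s :: real assumes "s = (A + B) / 2" shows "A * B \<le> s ^ 2"
proof -
  have "(A+B)^2 - 4*(A*B) = (A-B)^2" by (simp add: power2_eq_square algebra_simps)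
  moreover have "(A-B)^2 \<ge> 0" by simp
  moreover have "s^2 = (A+B)^2/4" unfolding assms by (simp add: power_divide)
  ultimately show ?thesis by linarith
qed
lemma Re_bound: "(oct_Re (oct_mult w z))\<^sup>2 \<le> (\<Sum>k<8. w k ^ 2) * (\<Sum>k<8. z k ^ 2)"
proof -
  define z' where "z' = (\<lambda>k::nat. if k = 0 then z k else - z k)"
  have 1: "oct_Re (oct_mult w z) = (\<Sum>k<8. w k * z' k)"
    unfolding oct_Re_def om0 sum8 z'_def by simp
  have 2: "(\<Sum>k<8. z' k ^ 2) = (\<Sum>k<8. z k ^ 2)"
    unfolding sum8 z'_def by simp
  show ?thesis unfolding 1 using Cauchy_Schwarz_ineq_sum[of w z' "{..<8}"] 2 by simp
qed
lemma amgm3: fixes A B C :: real assumes "A \<ge> 0" "B \<ge> 0" "C \<ge> 0"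
  shows "27 * (A * B * C) \<le> (A + B + C) ^ 3"
proof -
  define s where "s = (A + B) / 2"
  have "A * B \<le> s ^ 2" by (rule t1) (simp add: s_def)
  hence "A * B * C \<le> s^2 * C" using assms by (simp add: mult_right_mono)
  moreover have "(2 * s + C) ^ 3 - 27 * (s ^ 2 * C) = (s - C) ^ 2 * (8 * s + C)"
    by (simp add: power2_eq_square power3_eq_cube algebra_simps)
  moreover have "(s - C)^2 * (8 * s + C) \<ge> 0" using assms unfolding s_def by simp
  moreover have "2 * s + C = A + B + C" unfolding s_def by simp
  hence "(A + B + C) ^ 3 = (2 * s + C) ^ 3" by simp
  ultimately show ?thesis by linarith
qed
lemma P_bound: assumes "norm v = 1" shows "27 * (P24 v)\<^sup>2 \<le> 1"
proof -
  obtain X Y Z where v: "v = (X, Y, Z)" by (cases v) auto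
  have n: "norm X ^ 2 + norm Y ^ 2 + norm Z ^ 2 = 1"
    using assms unfolding v norm_Pair by (simp add: power2_eq_square)
  have "(P24 v)\<^sup>2 \<le> (\<Sum>k<8. oct_mult (oct_of X) (oct_of Y) k ^ 2) * (\<Sum>k<8. oct_of Z k ^ 2)"
    unfolding v P24_def by (simp add: Re_bound)
  also have "\<dots> = norm X ^ 2 * norm Y ^ 2 * norm Z ^ 2"
    by (simp add: mult_norm norm8)
  finally have "27 * (P24 v)\<^sup>2 \<le> 27 * (norm X ^ 2 * norm Y ^ 2 * norm Z ^ 2)" by simp
  also have "\<dots> \<le> (norm X ^ 2 + norm Y ^ 2 + norm Z ^ 2) ^ 3"
    by (rule amgm3) auto
  finally show ?thesis using n by simp
qed
lemma cube_rel: fixes c r W :: real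
  assumes "4*c^3 - 3*c = -(3*r*W)" "r = sqrt 3"
  shows "((2/r)*c)^3 - (2/r)*c = -2*W"
proof -
  have r2: "r^2 = 3" "r > 0" using assms(2) by simp_all
  have r3: "r^3 = 3 * r" using r2 by (simp add: power3_eq_cube power2_eq_square)
  have "((2/r)*c)^3 - (2/r)*c = (8*c^3 - 2*c*r^2) / r^3"
    using r2 by (simp add: field_simps power3_eq_cube power2_eq_square)
  also have "\<dots> = 2*(4*c^3 - 3*c) / (3*r)" using r2 r3 by (simp add: algebra_simps)
  also have "\<dots> = -2*W" using assms(1) r2 by (simp add: field_simps)
  finally show ?thesis .
qed

lemma roots:
  fixes W \<delta> :: real
  assumes W: "27 * W^2 \<le> 1"
  defines "t \<equiv> \<lambda>i. mu W \<delta> i + W * \<delta>"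
  shows "t 1 + t 2 + t 3 = 0" "t 1 ^ 2 + t 2 ^ 2 + t 3 ^ 2 = 2"
    "t 1 ^ 3 - t 1 = -2*W" "t 2 ^ 3 - t 2 = -2*W" "t 3 ^ 3 - t 3 = -2*W"
proof -
  define r where "r = sqrt 3"
  have r2: "r^2 = 3" "r > 0" unfolding r_def by simp_all
  have "(3*r*W)^2 \<le> 1" using W r2 by (simp add: power_mult_distrib)
  hence b: "-1 \<le> 3*r*W" "3*r*W \<le> 1" using abs_le_square_iff[of "3*r*W" 1] by auto
  define \<theta> where "\<theta> = arccos (3*r*W)"
  have ct: "cos \<theta> = 3*r*W" unfolding \<theta>_def using b by (simp add: cos_arccos)
  define a where "a = \<theta> / 3"
  define c where "c = cos a"
  define s where "s = sin a"
  have t1: "t 1 = (2/r) * cos (a - pi/3)" unfolding t_def mu_def r_def[symmetric] \<theta>_def[symmetric] a_def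
    by (simp add: diff_divide_distrib)
  have t2: "t 2 = (2/r) * cos (a + pi/3)" unfolding t_def mu_def r_def[symmetric] \<theta>_def[symmetric] a_def
    by (simp add: add_divide_distrib)
  have t3: "t 3 = (2/r) * cos (a + pi)" unfolding t_def mu_def r_def[symmetric] \<theta>_def[symmetric] a_def
    by simp
  have t1': "t 1 = c / r + s" unfolding t1 cos_diff c_def s_def using r2
    by (simp add: cos_60 sin_60 r_def[symmetric] field_simps)
  have t2': "t 2 = c / r - s" unfolding t2 cos_add c_def s_def using r2
    by (simp add: cos_60 sin_60 r_def[symmetric] field_simps)
  have t3': "t 3 = - 2 * c / r" unfolding t3 c_def by simp
  show "t 1 + t 2 + t 3 = 0" unfolding t1' t2' t3' by (simp add: field_simps)
  have cs: "c^2 + s^2 = 1" unfolding c_def s_def by simp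
  have u2: "(c / r) ^ 2 = c ^ 2 / 3" using r2 by (simp add: power_divide)
  have "(c / r + s) ^ 2 + (c / r - s) ^ 2 + (-2 * (c / r)) ^ 2 = 6 * (c / r) ^ 2 + 2 * s ^ 2"
    by (simp add: power2_eq_square algebra_simps)
  moreover have "-2 * c / r = -2 * (c / r)" by simp
  ultimately show "t 1 ^ 2 + t 2 ^ 2 + t 3 ^ 2 = 2" unfolding t1' t2' t3' using u2 cs by simp
  have "cos (3 * (a - pi/3)) = - cos \<theta>" unfolding a_def by (simp add: algebra_simps cos_diff)
  hence "4 * cos (a - pi/3) ^ 3 - 3 * cos (a - pi/3) = -(3*r*W)" using ct cos_treble_cos[of "a - pi/3"] by linarith
  from cube_rel[OF this r_def] show "t 1 ^ 3 - t 1 = -2*W" unfolding t1 .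
  have "cos (3 * (a + pi/3)) = - cos \<theta>" unfolding a_def by (simp add: algebra_simps cos_add)
  hence "4 * cos (a + pi/3) ^ 3 - 3 * cos (a + pi/3) = -(3*r*W)" using ct cos_treble_cos[of "a + pi/3"] by linarith
  from cube_rel[OF this r_def] show "t 2 ^ 3 - t 2 = -2*W" unfolding t2 .
  have "cos (3 * (a + pi)) = - cos \<theta>" unfolding a_def by (simp add: algebra_simps cos_add)
  hence "4 * cos (a + pi) ^ 3 - 3 * cos (a + pi) = -(3*r*W)" using ct cos_treble_cos[of "a + pi"] by linarith
  from cube_rel[OF this r_def] show "t 3 ^ 3 - t 3 = -2*W" unfolding t3 .
qed
lemma e_rel: fixes t1 s1 W Wb K k e u1 :: real
  assumes c1: "t1^3 - t1 = -2*W" and d1: "s1^3 - s1 = -2*Wb" and k3: "k^3 = K"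
  and e_def: "e = W - K * Wb" and u1_def: "u1 = t1 - K * s1"
  shows "2*e = u1 - (t1^3 - (k * s1)^3)"
proof -
  have h: "K*(s1^3 - s1) = K*(-2*Wb)" using d1 by simp
  have h2: "K*(s1^3 - s1) = K* s1^3 - K* s1" "K*(-2*Wb) = -2*(K*Wb)" by (simp_all add: algebra_simps)
  have "(k * s1)^3 = K * s1^3" using k3 by (simp add: power_mult_distrib)
  moreover have "2 * (W - K * Wb) = 2*W - 2*(K*Wb)" by simp
  ultimately show ?thesis unfolding e_def u1_def using c1 h h2 by linarith
qed
lemma cube_le_imp: fixes x y :: real assumes "x^3 \<le> y^3" shows "x \<le> y"
proof -
  have "root 3 (x^3) \<le> root 3 (y^3)" using assms by simp
  thus ?thesis by (simp add: odd_real_root_power_cancel)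
qed

lemma cube_less_imp: fixes x y :: real assumes "x^3 < y^3" shows "x < y"
proof -
  have "root 3 (x^3) < root 3 (y^3)" using assms by simp
  thus ?thesis by (simp add: odd_real_root_power_cancel)
qed

lemma maxsh: "max (a - x) (max (b - x) (c - x)) = max a (max b c) - (x::real)"
  by (simp add: max_def)
lemma minsh: "min (a - x) (min (b - x) (c - x)) = min a (min b c) - (x::real)"
  by (simp add: min_def)

lemma final:
  fixes t1 t2 t3 s1 s2 s3 W Wb K \<delta> :: real
  assumes st: "t1 + t2 + t3 = 0" and ss: "s1 + s2 + s3 = 0"
    and qt: "t1^2 + t2^2 + t3^2 = 2" and qs: "s1^2 + s2^2 + s3^2 = 2"
    and c1: "t1^3 - t1 = -2*W" and c2: "t2^3 - t2 = -2*W" and c3: "t3^3 - t3 = -2*W"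
    and d1: "s1^3 - s1 = -2*Wb" and d2: "s2^3 - s2 = -2*Wb" and d3: "s3^3 - s3 = -2*Wb"
    and K: "K > 0" and dl: "1 \<le> \<delta>" "\<delta> < 2"
    and nd: "\<bar>K - 1\<bar> + \<bar>Wb - W\<bar> \<noteq> 0"
  defines "v1 \<equiv> (t1 - W*\<delta>) - K*(s1 - Wb*\<delta>)"
    and "v2 \<equiv> (t2 - W*\<delta>) - K*(s2 - Wb*\<delta>)"
    and "v3 \<equiv> (t3 - W*\<delta>) - K*(s3 - Wb*\<delta>)"
  shows "(2 - \<delta>) / (4 + \<delta>) \<le> max v1 (max v2 v3) / (- min v1 (min v2 v3))
       \<and> max v1 (max v2 v3) / (- min v1 (min v2 v3)) \<le> (4 + \<delta>) / (2 - \<delta>)"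
proof -
  define e where "e = W - K * Wb"
  define u1 where "u1 = t1 - K* s1"
  define u2 where "u2 = t2 - K* s2"
  define u3 where "u3 = t3 - K* s3"
  define k where "k = root 3 K"
  have k3: "k^3 = K" unfolding k_def using K by (simp add: real_root_pow_pos2)
  have e1: "2*e = u1 - (t1^3 - (k * s1)^3)" by (rule e_rel[OF c1 d1 k3 e_def u1_def])
  have e2: "2*e = u2 - (t2^3 - (k * s2)^3)" by (rule e_rel[OF c2 d2 k3 e_def u2_def])
  have e3: "2*e = u3 - (t3^3 - (k * s3)^3)" by (rule e_rel[OF c3 d3 k3 e_def u3_def])
  have "k * (s1 + s2 + s3) = 0" using ss by simp
  hence ks: "k* s1 + k* s2 + k* s3 = 0" by (simp only: distrib_left)
  have hi: "2*e \<le> max u1 (max u2 u3)"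
  proof (rule ccontr)
    assume "\<not> ?thesis"
    hence "u1 < 2*e" "u2 < 2*e" "u3 < 2*e" by simp_all
    hence "t1^3 < (k* s1)^3" "t2^3 < (k* s2)^3" "t3^3 < (k* s3)^3" using e1 e2 e3 by linarith+
    hence "t1 < k * s1" "t2 < k * s2" "t3 < k * s3" by (simp_all add: cube_less_imp)
    thus False using st ks by linarith
  qed
  have lo: "min u1 (min u2 u3) \<le> 2*e"
  proof (rule ccontr)
    assume "\<not> ?thesis"
    hence "2*e < u1" "2*e < u2" "2*e < u3" by simp_all
    hence "(k* s1)^3 < t1^3" "(k* s2)^3 < t2^3" "(k* s3)^3 < t3^3" using e1 e2 e3 by linarith+
    hence "k * s1 < t1" "k * s2 < t2" "k * s3 < t3" by (simp_all add: cube_less_imp)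
    thus False using st ks by linarith
  qed
  define M where "M = max u1 (max u2 u3)"
  define m where "m = - min u1 (min u2 u3)"
  have su: "u1 + u2 + u3 = 0"
  proof -
    have "u1 + u2 + u3 = (t1 + t2 + t3) - K * (s1 + s2 + s3)" unfolding u1_def u2_def u3_def by (simp add: algebra_simps)
    thus ?thesis using st ss by simp
  qed
  have Mm: "M \<le> 2*m" "m \<le> 2*M" "0 \<le> M" "0 \<le> m" unfolding M_def m_def using su
    by (auto simp: max_def min_def)
  have nz: "M + m > 0"
  proof (rule ccontr)
    assume "\<not> ?thesis"
    hence "u1 = 0" "u2 = 0" "u3 = 0" unfolding M_def m_def using su by (auto simp: max_def min_def split: if_splits)
    hence ts: "t1 = K* s1" "t2 = K* s2" "t3 = K* s3" unfolding u1_def u2_def u3_def by auto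
    have "t1^2 + t2^2 + t3^2 = K^2 * (s1^2 + s2^2 + s3^2)" unfolding ts by (simp add: power_mult_distrib algebra_simps)
    hence "K^2 = 1" using qt qs by simp
    hence "K = 1" using K by (simp add: power2_eq_1_iff)
    hence "W = Wb" using c1 d1 ts by simp
    thus False using nd \<open>K = 1\<close> by simp
  qed
  have vu: "v1 = u1 - \<delta>*e" "v2 = u2 - \<delta>*e" "v3 = u3 - \<delta>*e"
    unfolding v1_def v2_def v3_def u1_def u2_def u3_def e_def by (simp_all add: algebra_simps)
  have vmax: "max v1 (max v2 v3) = M - \<delta>*e"
    unfolding M_def vu by (rule maxsh)
  have vmin: "- min v1 (min v2 v3) = m + \<delta>*e"
    unfolding m_def vu by (simp add: minsh)
  have A: "m + 2*e \<ge> 0" using lo unfolding m_def by simp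
  have B: "M - 2*e \<ge> 0" using hi unfolding M_def by simp
  have C: "5*m - M + 6*e \<ge> 0" using A Mm by linarith
  have D: "5*M - m - 6*e \<ge> 0" using B Mm by linarith
  have C': "(6*m + 6*e) \<ge> M + m" using A Mm by linarith
  have p1: "(2-\<delta>) * (6*m + 6*e) \<ge> (2-\<delta>) * (M+m)" using C' dl by (intro mult_left_mono) auto
  have p2: "(2-\<delta>)*(M+m) > 0" using nz dl by simp
  have p3: "(\<delta>-1)*(m+2*e) \<ge> 0" using A dl by simp
  have den: "m + \<delta>*e > 0"
  proof -
    have "6*m + 6*(\<delta>*e) = (2-\<delta>) * (6*m + 6*e) + 6*((\<delta>-1)*(m+2*e))" by (simp add: algebra_simps)
    thus ?thesis using p1 p2 p3 by linarith
  qed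
  have q1: "(2-\<delta>)*(5*M - m - 6*e) \<ge> 0" "(\<delta>-1)*(6*M - 12*e) \<ge> 0"
    using D B dl by simp_all
  have q2: "(2-\<delta>)*(5*m - M + 6*e) \<ge> 0" "(\<delta>-1)*(6*m + 12*e) \<ge> 0"
    using C A dl by simp_all
  have L: "(2-\<delta>) * (m + \<delta>*e) \<le> (4+\<delta>) * (M - \<delta>*e)"
  proof -
    have "(4+\<delta>) * (M - \<delta>*e) - (2-\<delta>) * (m + \<delta>*e) = (2-\<delta>)*(5*M - m - 6*e) + (\<delta>-1)*(6*M - 12*e)"
      by (simp add: algebra_simps)
    thus ?thesis using q1 by linarith
  qed
  have U: "(2-\<delta>) * (M - \<delta>*e) \<le> (4+\<delta>) * (m + \<delta>*e)"
  proof -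
    have "(4+\<delta>) * (m + \<delta>*e) - (2-\<delta>) * (M - \<delta>*e) = (2-\<delta>)*(5*m - M + 6*e) + (\<delta>-1)*(6*m + 12*e)"
      by (simp add: algebra_simps)
    thus ?thesis using q2 by linarith
  qed
  have pos: "4 + \<delta> > 0" "2 - \<delta> > 0" using dl by auto
  define N where "N = M - \<delta>*e"
  define D where "D = m + \<delta>*e"
  have l1: "(2-\<delta>)*D \<le> N*(4+\<delta>)" using L unfolding N_def D_def by (simp add: mult.commute)
  have l2: "(2-\<delta>)*D/(4+\<delta>) \<le> N" unfolding pos_divide_le_eq[OF pos(1)] by (rule l1)
  have l3: "(2-\<delta>)/(4+\<delta>) \<le> N/D" unfolding pos_le_divide_eq[OF den[folded D_def]] using l2 by simp
  have u1: "N*(2-\<delta>) \<le> (4+\<delta>)*D" using U unfolding N_def D_def by (simp add: mult.commute)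
  have u2: "N \<le> (4+\<delta>)*D/(2-\<delta>)" unfolding pos_le_divide_eq[OF pos(2)] by (rule u1)
  have u3: "N/D \<le> (4+\<delta>)/(2-\<delta>)" unfolding pos_divide_le_eq[OF den[folded D_def]] using u2 by simp
  show ?thesis unfolding vmax vmin N_def[symmetric] D_def[symmetric] using l3 u3 by simp
qed
theorem lemma4p1:
  fixes H :: "((real^8) \<times> (real^8) \<times> (real^8)) set"
    and a b :: "(real^8) \<times> (real^8) \<times> (real^8)"
    and \<delta> K :: real
  assumes "subspace H" and "dim H = 21"
    and "a \<in> H" and "norm a = 1" and "b \<in> H" and "norm b = 1"
    and "1 \<le> \<delta>" and "\<delta> < 2"
    and "K > 0"
    and "\<bar>K - 1\<bar> + \<bar>P24 b - P24 a\<bar> \<noteq> 0"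
  shows "(2 - \<delta>) / (4 + \<delta>) \<le>
           mu_plus (P24 a) (P24 b) \<delta> K / (- mu_minus (P24 a) (P24 b) \<delta> K)
         \<and> mu_plus (P24 a) (P24 b) \<delta> K / (- mu_minus (P24 a) (P24 b) \<delta> K)
           \<le> (4 + \<delta>) / (2 - \<delta>)"
proof -
  have Wa: "27 * (P24 a)^2 \<le> 1" using P_bound assms(4) by blast
  have Wb: "27 * (P24 b)^2 \<le> 1" using P_bound assms(6) by blast
  note ra = roots[OF Wa, of \<delta>]
  note rb = roots[OF Wb, of \<delta>]
  note F = final[OF ra(1) rb(1) ra(2) rb(2) ra(3) ra(4) ra(5) rb(3) rb(4) rb(5) assms(9) assms(7) assms(8) assms(10)]
  show ?thesis using F unfolding mu_plus_def mu_minus_def by simp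
qed
end
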